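(* Let $v_1,\dots,v_d\in\mathbb{Z}^d$ be linearly independent. If $a\in\mathbb{Z}^d$, then the parallelepiped $P=a+\sum_{i=1}^d[0,v_i]$ contains a unimodular copy of $\Delta_d$. If $a\in\mathbb{R}^d$, then the parallelepiped $P=a+\sum_{i=1}^d[0,2v_i]$ contains a unimodular copy of $\Delta_d$.
   Context: $[v,w]$ denotes the segment $\mathrm{conv}(v,w)$ and sums are Minkowski sums. $\Delta_d=\mathrm{conv}(0,e_1,\dots,e_d)$. A unimodular copy of a set $Y$ is $\{Ay+b:y\in Y\}$ with $A\in\mathrm{GL}(d,\mathbb{Z})$ and $b\in\mathbb{Z}^d$. *)

theory Defs
  imports "HOL-Analysis.Analysis"
begin

definition int_vec :: "real^'n \<Rightarrow> bool" where
  "int_vec x \<longleftrightarrow> (\<forall>i. x $ i \<in> \<int>)"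

text \<open>GL(d,Z): integer matrices whose inverse is also an integer matrix (equivalently det = +-1).\<close>
definition int_mat :: "real^'n^'n \<Rightarrow> bool" where
  "int_mat A \<longleftrightarrow> (\<forall>i j. A $ i $ j \<in> \<int>)"

definition GL_int :: "real^'n^'n \<Rightarrow> bool" where
  "GL_int A \<longleftrightarrow> int_mat A \<and> (\<exists>B. int_mat B \<and> A ** B = mat 1 \<and> B ** A = mat 1)"

definition std_simplex :: "(real^'n) set" where
  "std_simplex = convex hull (insert 0 (range (\<lambda>i. axis i 1)))"

definition unimodular_copy :: "(real^'n) set \<Rightarrow> (real^'n) set \<Rightarrow> bool" where
  "unimodular_copy Y S \<longleftrightarrow> (\<exists>A b. GL_int A \<and> int_vec b \<and> S = (\<lambda>y. A *v y + b) ` Y)"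

definition parallelepiped :: "real^'n \<Rightarrow> ('n \<Rightarrow> real^'n) \<Rightarrow> (real^'n) set" where
  "parallelepiped a w = {a + (\<Sum>i\<in>UNIV. p i) | p. \<forall>i. p i \<in> closed_segment 0 (w i)}"

end

theory Submission
  imports Defs
begin

lemma lattice_basis:
  fixes L :: "(real^'n::finite) set" and D :: nat and r :: "'n \<Rightarrow> nat"
  assumes diff: "\<And>x y. x \<in> L \<Longrightarrow> y \<in> L \<Longrightarrow> x - y \<in> L"
    and smul: "\<And>x n. x \<in> L \<Longrightarrow> (of_int n :: real) *\<^sub>R x \<in> L"
    and intv: "\<And>z. int_vec z \<Longrightarrow> z \<in> L"
    and disc: "\<And>c k. c \<in> L \<Longrightarrow> real D * c$k \<in> \<int>"
    and Dpos: "D > 0"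
    and r: "inj r"
  shows "\<exists>q. (\<forall>k. q k \<in> L \<and> (\<forall>i. 0 \<le> q k $ i \<and> q k $ i \<le> 1)) \<and>
             (\<forall>c\<in>L. \<exists>z::'n\<Rightarrow>int. c = (\<Sum>k\<in>UNIV. of_int (z k) *\<^sub>R q k))"
proof -
  define Lk where "Lk k = {c\<in>L. \<forall>i. r k < r i \<longrightarrow> c$i = 0}" for k
  have ax: "axis k 1 \<in> Lk k" for k
  proof -
    have "int_vec (axis k (1::real))" by (auto simp: int_vec_def axis_def)
    then show ?thesis using r by (auto simp: Lk_def axis_def intro!: intv)
  qed
  have ex: "\<exists>c. c \<in> Lk k \<and> c$k > 0 \<and> (\<forall>c'\<in>Lk k. c'$k > 0 \<longrightarrow> c$k \<le> c'$k)" for k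
  proof -
    define P where "P n = (\<exists>c\<in>Lk k. c$k > 0 \<and> real D * c$k = real n)" for n
    have "P D" unfolding P_def using ax[of k] by (intro bexI[of _ "axis k 1"]) (auto simp: axis_def)
    then have PL: "P (LEAST n. P n)" by (rule LeastI)
    then obtain c where c: "c \<in> Lk k" "c$k > 0" "real D * c$k = real (LEAST n. P n)"
      unfolding P_def by blast
    have "c$k \<le> c'$k" if c': "c' \<in> Lk k" "c'$k > 0" for c'
    proof -
      have "real D * c'$k \<in> \<int>" using c' disc by (auto simp: Lk_def)
      then obtain m where m: "real D * c'$k = of_int m" by (auto elim: Ints_cases)
      have "m > 0" using m c'(2) Dpos
        by (metis of_int_0_less_iff of_nat_0_less_iff zero_less_mult_iff)
      then have "P (nat m)" unfolding P_def using c' m by auto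
      then have "(LEAST n. P n) \<le> nat m" by (rule Least_le)
      then have "real D * c$k \<le> real D * c'$k" using c(3) m \<open>m > 0\<close> by simp
      then show ?thesis using Dpos by simp
    qed
    then show ?thesis using c by blast
  qed
  then obtain c where c: "\<And>k. c k \<in> Lk k" "\<And>k. c k $ k > 0"
    "\<And>k c'. c' \<in> Lk k \<Longrightarrow> c'$k > 0 \<Longrightarrow> c k $ k \<le> c'$k"
    by metis
  define q where "q k = c k - (\<chi> i. if i = k then 0 else of_int \<lfloor>c k $ i\<rfloor>)" for k
  have qL: "q k \<in> Lk k" for k
  proof -
    have "int_vec ((\<chi> i. if i = k then 0 else of_int \<lfloor>c k $ i\<rfloor>) :: real^'n)"
      by (auto simp: int_vec_def)
    then have "q k \<in> L" unfolding q_def using c(1)[of k] diff[OF _ intv] by (auto simp: Lk_def)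
    moreover have "q k $ i = 0" if "r k < r i" for i
      using c(1)[of k] that by (auto simp: Lk_def q_def)
    ultimately show ?thesis by (auto simp: Lk_def)
  qed
  have qk: "q k $ k = c k $ k" for k by (simp add: q_def)
  have qi: "i \<noteq> k \<Longrightarrow> 0 \<le> q k $ i \<and> q k $ i < 1" for i k
    by (simp add: q_def) linarith
  have le1: "c k $ k \<le> 1" for k using c(3)[OF ax[of k]] by simp
  have mult: "\<exists>m::int. y$k = of_int m * q k $ k" if y: "y \<in> Lk k" for y k
  proof -
    define t where "t = q k $ k"
    have t: "t > 0" using c(2) qk t_def by simp
    define m where "m = \<lfloor>y$k / t\<rfloor>"
    define y' where "y' = y - (of_int m :: real) *\<^sub>R q k"
    have "y' \<in> Lk k" using y qL[of k] unfolding y'_def Lk_def by (auto intro!: diff smul)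
    have y'k: "y'$k = y$k - of_int m * t" by (simp add: y'_def t_def)
    have "of_int m \<le> y$k / t" "y$k / t < of_int m + 1" unfolding m_def by linarith+
    then have "of_int m * t \<le> y$k" "y$k < (of_int m + 1) * t" using t
      by (simp_all add: field_simps)
    then have lo: "0 \<le> y'$k" and hi: "y'$k < t" using y'k by (simp_all add: algebra_simps)
    have "y'$k = 0"
    proof (rule ccontr)
      assume "y'$k \<noteq> 0"
      then have "c k $ k \<le> y'$k" using c(3)[OF \<open>y' \<in> Lk k\<close>] lo by simp
      then show False using hi qk t_def by simp
    qed
    then show ?thesis using y'k t_def by auto
  qed
  have ind: "\<forall>x\<in>L. (\<forall>i. m \<le> r i \<longrightarrow> x$i = 0) \<longrightarrow> (\<exists>z::'n\<Rightarrow>int. x = (\<Sum>k\<in>UNIV. of_int (z k) *\<^sub>R q k))" for m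
  proof (induction m)
    case 0
    show ?case
    proof (intro ballI impI)
      fix x :: "real^'n" assume "\<forall>i. 0 \<le> r i \<longrightarrow> x$i = 0"
      then have "x = 0" by (simp add: vec_eq_iff)
      then show "\<exists>z::'n\<Rightarrow>int. x = (\<Sum>k\<in>UNIV. of_int (z k) *\<^sub>R q k)"
        by (intro exI[of _ "\<lambda>_. 0"]) simp
    qed
  next
    case (Suc m)
    show ?case
    proof (intro ballI impI)
      fix x :: "real^'n" assume xL: "x \<in> L" and x0: "\<forall>i. Suc m \<le> r i \<longrightarrow> x$i = 0"
      show "\<exists>z::'n\<Rightarrow>int. x = (\<Sum>k\<in>UNIV. of_int (z k) *\<^sub>R q k)"
      proof (cases "\<exists>k. r k = m")
        case False
        then have "\<forall>i. m \<le> r i \<longrightarrow> x$i = 0" using x0 by (metis Suc_leI le_neq_implies_less)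
        then show ?thesis using Suc.IH xL by blast
      next
        case True
        then obtain k where k: "r k = m" by blast
        have "x \<in> Lk k" using xL x0 k by (auto simp: Lk_def)
        then obtain n where n: "x$k = of_int n * q k $ k" using mult by blast
        define x' where "x' = x - (of_int n :: real) *\<^sub>R q k"
        have "x' \<in> L" using xL qL[of k] unfolding x'_def Lk_def by (auto intro!: diff smul)
        have "x'$i = 0" if "m \<le> r i" for i
        proof (cases "i = k")
          case True then show ?thesis using n by (simp add: x'_def)
        next
          case False
          then have "r i \<noteq> m" using k r by (auto dest: injD)
          then have "r k < r i" "Suc m \<le> r i" using that k by auto
          then show ?thesis using x0 qL[of k] by (auto simp: x'_def Lk_def)
        qed
        then obtain z where z: "x' = (\<Sum>k\<in>UNIV. of_int (z k) *\<^sub>R q k)"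
          using Suc.IH \<open>x' \<in> L\<close> by blast
        define z' where "z' = z(k := z k + n)"
        have "(\<Sum>j\<in>UNIV. of_int (z' j) *\<^sub>R q j) =
              (\<Sum>j\<in>UNIV. of_int (z j) *\<^sub>R q j + (if j = k then (of_int n :: real) *\<^sub>R q k else 0))"
          by (rule sum.cong) (auto simp: z'_def algebra_simps)
        also have "\<dots> = x' + (of_int n :: real) *\<^sub>R q k"
          by (simp add: sum.distrib z)
        also have "\<dots> = x" by (simp add: x'_def)
        finally show ?thesis by metis
      qed
    qed
  qed
  define M where "M = Suc (Max (range r))"
  have "r i < M" for i unfolding M_def by (simp add: le_imp_less_Suc)
  then have gen: "\<forall>x\<in>L. \<exists>z::'n\<Rightarrow>int. x = (\<Sum>k\<in>UNIV. of_int (z k) *\<^sub>R q k)"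
    using ind[of M] by (meson leD)
  have "\<forall>k. q k \<in> L \<and> (\<forall>i. 0 \<le> q k $ i \<and> q k $ i \<le> 1)"
  proof (intro allI conjI)
    fix k i
    show "q k \<in> L" using qL by (simp add: Lk_def)
    show "0 \<le> q k $ i" using qi[of i k] qk c(2)[of k] by (cases "i = k") auto
    show "q k $ i \<le> 1" using qi[of i k] qk le1[of k] by (cases "i = k") auto
  qed
  then show ?thesis using gen by blast
qed

lemma pp_mem:
  fixes w :: "'n::finite \<Rightarrow> real^'n"
  assumes "\<And>i. 0 \<le> t i \<and> t i \<le> 1"
  shows "a + (\<Sum>i\<in>UNIV. t i *\<^sub>R w i) \<in> parallelepiped a w"
  unfolding parallelepiped_def
proof (intro CollectI exI conjI allI)
  show "a + (\<Sum>i\<in>UNIV. t i *\<^sub>R w i) = a + (\<Sum>i\<in>UNIV. (\<lambda>i. t i *\<^sub>R w i) i)" by simp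
  fix i show "t i *\<^sub>R w i \<in> closed_segment 0 (w i)"
    using assms[of i] by (auto simp: in_segment)
qed

lemma det_Ints: "(\<And>i j. A$i$j \<in> \<int>) \<Longrightarrow> det (A::real^'n::finite^'n) \<in> \<int>"
  unfolding det_def by (intro Ints_sum Ints_mult Ints_prod) auto

lemma int_vec_mult: "(\<And>i j. V$i$j \<in> \<int>) \<Longrightarrow> int_vec z \<Longrightarrow> int_vec (V *v (z::real^'n::finite))"
  unfolding int_vec_def matrix_vector_mult_def by (auto intro!: Ints_sum Ints_mult)

theorem lemma4p2:
  fixes v :: "'n::finite \<Rightarrow> real^'n"
  assumes vint: "\<And>i. int_vec (v i)"
    and indep: "inj v" "independent (range v)"
  shows "(\<forall>a. int_vec a \<longrightarrow>
            (\<exists>S. unimodular_copy std_simplex S \<and> S \<subseteq> parallelepiped a v))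
       \<and> (\<forall>a. \<exists>S. unimodular_copy std_simplex S \<and> S \<subseteq> parallelepiped a (\<lambda>i. 2 *\<^sub>R v i))"
proof -
  define V :: "real^'n^'n" where "V = (\<chi> j i. v i $ j)"
  have Vc: "V *v c = (\<Sum>i\<in>UNIV. c$i *\<^sub>R v i)" for c
    by (simp add: V_def matrix_vector_mult_def vec_eq_iff mult.commute)
  have Vint: "V$i$j \<in> \<int>" for i j using vint by (simp add: V_def int_vec_def)
  have colV: "column i V = v i" for i by (simp add: column_def V_def vec_eq_iff)
  have "\<exists>B. B ** V = mat 1"
    unfolding matrix_left_invertible_independent_columns colV scalar_mult_eq_scaleR
  proof (intro allI impI)
    fix c :: "'n \<Rightarrow> real" and i assume c: "(\<Sum>i\<in>UNIV. c i *\<^sub>R v i) = 0"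
    have ie: "\<forall>c. (\<Sum>x\<in>range v. c x *\<^sub>R x) = 0 \<longrightarrow> (\<forall>x\<in>range v. c x = 0)"
      using indep(2) unfolding independent_explicit by blast
    have "(\<Sum>x\<in>range v. (c \<circ> inv v) x *\<^sub>R x) = (\<Sum>i\<in>UNIV. c i *\<^sub>R v i)"
      using indep(1) by (simp add: sum.reindex)
    then have s0: "(\<Sum>x\<in>range v. (c \<circ> inv v) x *\<^sub>R x) = 0" using c by simp
    have "(c \<circ> inv v) (v i) = 0" using ie[rule_format, OF s0] by blast
    then show "c i = 0" using indep(1) by simp
  qed
  then obtain Vinv where Vinv1: "Vinv ** V = mat 1" by blast
  then have Vinv2: "V ** Vinv = mat 1" using matrix_left_right_inverse by blast
  have "invertible V" using Vinv1 Vinv2 unfolding invertible_def by blast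
  then have detnz: "det V \<noteq> 0" by (simp add: invertible_det_nz)
  have "det V \<in> \<int>" using Vint by (rule det_Ints)
  then obtain d where d: "det V = of_int d" by (auto elim: Ints_cases)
  define D where "D = nat \<bar>d\<bar>"
  have Dpos: "D > 0" using detnz d by (simp add: D_def)
  have realD: "real D = \<bar>det V\<bar>" using d by (simp add: D_def)
  define L where "L = {c. int_vec (V *v c)}"
  have diff: "x \<in> L \<Longrightarrow> y \<in> L \<Longrightarrow> x - y \<in> L" for x y
    by (auto simp: L_def int_vec_def matrix_vector_mult_diff_distrib)
  have smul: "x \<in> L \<Longrightarrow> (of_int n :: real) *\<^sub>R x \<in> L" for x n
    by (auto simp: L_def int_vec_def matrix_vector_mult_scaleR)
  have intv: "int_vec z \<Longrightarrow> z \<in> L" for z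
    unfolding L_def using int_vec_mult[OF Vint] by blast
  have disc: "real D * c$k \<in> \<int>" if "c \<in> L" for c k
  proof -
    have "det ((\<chi> i j. if j = k then (V *v c)$i else V$i$j) :: real^'n^'n) \<in> \<int>"
      using that Vint by (intro det_Ints) (auto simp: L_def int_vec_def)
    then have "c$k * det V \<in> \<int>" by (simp add: cramer_lemma)
    then show ?thesis unfolding realD
      by (cases "det V \<ge> 0") (auto simp: mult.commute minus_in_Ints_iff)
  qed
  obtain r :: "'n \<Rightarrow> nat" and nn where "r ` UNIV = {i. i < nn}" "inj_on r UNIV"
    using finite_imp_inj_to_nat_seg[of "UNIV::'n set"] by auto
  then have r: "inj r" by simp
  obtain q where q: "\<And>k. q k \<in> L" "\<And>k i. 0 \<le> q k $ i \<and> q k $ i \<le> 1"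
    and gen: "\<And>c. c \<in> L \<Longrightarrow> \<exists>z::'n\<Rightarrow>int. c = (\<Sum>k\<in>UNIV. of_int (z k) *\<^sub>R q k)"
    using lattice_basis[OF diff smul intv disc Dpos r] by blast
  define Q :: "real^'n^'n" where "Q = (\<chi> j k. q k $ j)"
  define A where "A = V ** Q"
  have Qax: "Q *v axis k 1 = q k" for k
    by (simp add: matrix_vector_mult_basis column_def Q_def vec_eq_iff)
  have Aax: "A *v axis k 1 = V *v q k" for k
    by (simp add: A_def Qax flip: matrix_vector_mul_assoc)
  have intA: "int_mat A"
  proof -
    have "A$i$j = (V *v q j)$i" for i j
    proof -
      have "A$i$j = (A *v axis j 1)$i" by (simp add: matrix_vector_mult_basis column_def)
      then show ?thesis by (simp only: Aax)
    qed
    then show ?thesis using q(1) by (simp add: int_mat_def L_def int_vec_def)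
  qed
  have "\<forall>j. \<exists>z::'n\<Rightarrow>int. Vinv *v axis j 1 = (\<Sum>k\<in>UNIV. of_int (z k) *\<^sub>R q k)"
  proof
    fix j
    have "V *v (Vinv *v axis j 1) = axis j 1"
      by (simp add: matrix_vector_mul_assoc Vinv2)
    then have "Vinv *v axis j 1 \<in> L" by (auto simp: L_def int_vec_def axis_def)
    then show "\<exists>z::'n\<Rightarrow>int. Vinv *v axis j 1 = (\<Sum>k\<in>UNIV. of_int (z k) *\<^sub>R q k)" by (rule gen)
  qed
  then obtain z where z: "\<And>j. Vinv *v axis j 1 = (\<Sum>k\<in>UNIV. of_int (z j k) *\<^sub>R q k)" by metis
  define B :: "real^'n^'n" where "B = (\<chi> k j. of_int (z j k))"
  have intB: "int_mat B" by (simp add: int_mat_def B_def)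
  have QB: "Q ** B = Vinv"
  proof -
    have "(Q ** B)$i$j = Vinv$i$j" for i j
    proof -
      have "Vinv$i$j = (Vinv *v axis j 1)$i" by (simp add: matrix_vector_mult_basis column_def)
      also have "\<dots> = (\<Sum>k\<in>UNIV. of_int (z j k) * q k $ i)" by (simp add: z)
      finally show ?thesis by (simp add: matrix_matrix_mult_def Q_def B_def mult.commute)
    qed
    then show ?thesis by (simp add: vec_eq_iff)
  qed
  have AB: "A ** B = mat 1" by (simp add: A_def QB Vinv2 flip: matrix_mul_assoc)
  then have BA: "B ** A = mat 1" using matrix_left_right_inverse by blast
  have GL: "GL_int A" unfolding GL_int_def using intA intB AB BA by blast
  define box where "box = {c::real^'n. \<forall>i. 0 \<le> c$i \<and> c$i \<le> 1}"
  have cbox: "convex box"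
    unfolding convex_def
  proof (intro ballI allI impI)
    fix x y :: "real^'n" and u w :: real
    assume x: "x \<in> box" and y: "y \<in> box" and u: "0 \<le> u" and w: "0 \<le> w" and uw: "u + w = 1"
    show "u *\<^sub>R x + w *\<^sub>R y \<in> box" unfolding box_def
    proof (intro CollectI allI conjI)
      fix i
      have xi: "0 \<le> x$i" "x$i \<le> 1" and yi: "0 \<le> y$i" "y$i \<le> 1" using x y by (auto simp: box_def)
      show "0 \<le> (u *\<^sub>R x + w *\<^sub>R y)$i" using xi yi u w by simp
      show "(u *\<^sub>R x + w *\<^sub>R y)$i \<le> 1" using convex_bound_le[OF xi(2) yi(2) u w uw] by simp
    qed
  qed
  define G where "G = (\<lambda>y. A *v y) -` ((\<lambda>c. V *v c) ` box)"
  have "convex G" unfolding G_def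
    by (intro convex_linear_vimage convex_linear_image cbox matrix_vector_mul_linear)
  moreover have "insert 0 (range (\<lambda>i. axis i 1)) \<subseteq> G"
  proof -
    have "0 \<in> G" unfolding G_def box_def by (auto intro!: image_eqI[of _ _ 0])
    moreover have "axis k 1 \<in> G" for k
      unfolding G_def box_def using q(2)[of k] by (auto simp: Aax)
    ultimately show ?thesis by auto
  qed
  ultimately have hullG: "std_simplex \<subseteq> G" unfolding std_simplex_def
    by (simp add: hull_minimal)
  have main: "\<exists>S. unimodular_copy std_simplex S \<and> S \<subseteq> {a + V *v c | c. c \<in> box}"
    if a: "int_vec a" for a
  proof (intro exI conjI)
    show "unimodular_copy std_simplex ((\<lambda>y. A *v y + a) ` std_simplex)"
      unfolding unimodular_copy_def by (intro exI[of _ A] exI[of _ a] conjI GL a refl)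
    show "(\<lambda>y. A *v y + a) ` std_simplex \<subseteq> {a + V *v c | c. c \<in> box}"
    proof
      fix x assume "x \<in> (\<lambda>y. A *v y + a) ` std_simplex"
      then obtain y where y: "y \<in> std_simplex" "x = A *v y + a" by blast
      then obtain c where "c \<in> box" "A *v y = V *v c" using hullG unfolding G_def by blast
      then have "x = a + V *v c" using y(2) by (simp add: add.commute)
      then show "x \<in> {a + V *v c | c. c \<in> box}" using \<open>c \<in> box\<close> by blast
    qed
  qed
  have part1: "parallelepiped a v \<supseteq> {a + V *v c | c. c \<in> box}" for a
  proof
    fix x assume "x \<in> {a + V *v c | c. c \<in> box}"
    then obtain c where c: "c \<in> box" "x = a + V *v c" by blast
    have "a + (\<Sum>i\<in>UNIV. c$i *\<^sub>R v i) \<in> parallelepiped a v"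
      by (rule pp_mem) (use c(1) in \<open>auto simp: box_def\<close>)
    then show "x \<in> parallelepiped a v" using c(2) Vc by simp
  qed
  show ?thesis
  proof (intro conjI allI impI)
    fix a :: "real^'n" assume "int_vec a"
    then obtain S where S: "unimodular_copy std_simplex S" "S \<subseteq> {a + V *v c | c. c \<in> box}"
      using main by blast
    show "\<exists>S. unimodular_copy std_simplex S \<and> S \<subseteq> parallelepiped a v"
      using S(1) subset_trans[OF S(2) part1[of a]] by blast
  next
    fix a :: "real^'n"
    define c0 where "c0 = Vinv *v (- a)"
    have Vc0: "V *v c0 = - a" by (simp add: c0_def matrix_vector_mul_assoc Vinv2)
    define fl :: "real^'n" where "fl = (\<chi> i. of_int \<lfloor>c0$i\<rfloor>)"
    define a' where "a' = a + V *v (c0 - fl)"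
    have "a' = - (V *v fl)" by (simp add: a'_def matrix_vector_mult_diff_distrib Vc0)
    moreover have "int_vec (V *v fl)" by (rule int_vec_mult[OF Vint]) (simp add: int_vec_def fl_def)
    ultimately have a'int: "int_vec a'" by (simp add: int_vec_def)
    have "{a' + V *v c | c. c \<in> box} \<subseteq> parallelepiped a (\<lambda>i. 2 *\<^sub>R v i)"
    proof
      fix x assume "x \<in> {a' + V *v c | c. c \<in> box}"
      then obtain c where c: "c \<in> box" "x = a' + V *v c" by blast
      define e where "e = c0 - fl + c"
      have "x = a + V *v e" by (simp add: c(2) a'_def e_def matrix_vector_right_distrib add.assoc)
      also have "\<dots> = a + (\<Sum>i\<in>UNIV. (e$i / 2) *\<^sub>R (2 *\<^sub>R v i))" by (simp add: Vc)
      also have "\<dots> \<in> parallelepiped a (\<lambda>i. 2 *\<^sub>R v i)"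
      proof (rule pp_mem)
        fix i
        have "0 \<le> c0$i - of_int \<lfloor>c0$i\<rfloor>" "c0$i - of_int \<lfloor>c0$i\<rfloor> < 1" by linarith+
        moreover have "0 \<le> c$i" "c$i \<le> 1" using c(1) by (auto simp: box_def)
        moreover have "e$i = c0$i - of_int \<lfloor>c0$i\<rfloor> + c$i" by (simp add: e_def fl_def)
        ultimately show "0 \<le> e$i / 2 \<and> e$i / 2 \<le> 1" by linarith
      qed
      finally show "x \<in> parallelepiped a (\<lambda>i. 2 *\<^sub>R v i)" .
    qed
    note sub = this
    obtain S where S: "unimodular_copy std_simplex S" "S \<subseteq> {a' + V *v c | c. c \<in> box}"
      using main[OF a'int] by blast
    show "\<exists>S. unimodular_copy std_simplex S \<and> S \<subseteq> parallelepiped a (\<lambda>i. 2 *\<^sub>R v i)"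
      using S(1) subset_trans[OF S(2) sub] by blast
  qed
qed

end
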